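(* Let $F$ be a CDF on $\mathbb{R}$ and $\gamma$ a (nonnegative) Borel measure on $\mathbb{R}$. Then $$\mathrm{CRPS}_\gamma(F) = \int F(u)\left(1 - F(u)\right)\mathrm{d}\gamma(u).$$ In particular, let $\mu\in\mathbb{R}$, $\sigma>0$, $t\in\mathbb{R}$, and let $\Phi_{\mu,\sigma^2}$ be the CDF of $\mathcal{N}(\mu,\sigma^2)$. (i) For $\mathrm{d}\gamma_1(u) = \mathbb{1}\{t\leq u\}\,\mathrm{d}\lambda(u)$, with $\tilde t = (t-\mu)/\sigma$, $$\mathrm{CRPS}_{\gamma_1}(\Phi_{\mu,\sigma^2}) = \sigma\left[\tilde t\,\Phi(\tilde t)^2 - \tilde t\,\Phi(\tilde t) + \frac{1}{\sqrt{\pi}} - \frac{1}{\sqrt{\pi}}\Phi(\tilde t\sqrt{2}) + 2\phi(\tilde t)\Phi(\tilde t) - \phi(\tilde t)\right],$$ and equivalently $$\mathrm{CRPS}_{\gamma_1}(\Phi_{\mu,\sigma^2}) = \sigma\,\mathbb{E}\left[\left(\tilde N - \max\left(N, \tfrac{t-\mu}{\sigma}\right)\right)_+\right]$$ for $N,\tilde N$ i.i.d. $\mathcal{N}(0,1)$. (ii) For $\sigma_\gamma>0$ and $\mathrm{d}\gamma_2(u) = \frac{1}{\sigma_\gamma}\phi\!\left(\frac{u-t}{\sigma_\gamma}\right)\mathrm{d}\lambda(u)$, $$\mathrm{CRPS}_{\gamma_2}(\Phi_{\mu,\sigma^2}) = \Phi\!\left(\begin{pmatrix}0\\0\end{pmatrix};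 \begin{pmatrix}\mu-t\\ t-\mu\end{pmatrix}, \begin{pmatrix}\sigma_\gamma^2+\sigma^2 & -\sigma_\gamma^2\\ -\sigma_\gamma^2 & \sigma_\gamma^2+\sigma^2\end{pmatrix}\right).$$
   Context: $\lambda$ is Lebesgue measure on $\mathbb{R}$; $\phi$ and $\Phi$ are the standard normal density and CDF; $\Phi(\cdot;\boldsymbol{\mu},\boldsymbol{\Sigma})$ is the bivariate Gaussian CDF with mean $\boldsymbol{\mu}$ and covariance $\boldsymbol{\Sigma}$; $(a)_+ = \max(a,0)$. For a CDF $F$, a Borel measure $\gamma$ and $y\in\mathbb{R}$, the threshold-weighted CRPS is $\mathrm{CRPS}_\gamma(F,y) = \int_{-\infty}^{\infty}[F(u)-\mathbb{1}\{y\leq u\}]^2\,\mathrm{d}\gamma(u)$, and the expected threshold-weighted CRPS is $\mathrm{CRPS}_\gamma(F) = \int_{-\infty}^{\infty}\mathrm{CRPS}_\gamma(F,y')\,\mathrm{d}F(y')$. *)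

theory Defs
  imports "HOL-Probability.Probability"
begin

text \<open>Threshold-weighted CRPS of a CDF F at an observation y, w.r.t. a Borel measure gamma.
  The integrand is nonnegative, so the (extended nonnegative) Lebesgue integral is used.\<close>
definition crps_at :: "real measure \<Rightarrow> (real \<Rightarrow> real) \<Rightarrow> real \<Rightarrow> ennreal" where
  "crps_at \<gamma> F y = (\<integral>\<^sup>+ u. ennreal ((F u - of_bool (y \<le> u))\<^sup>2) \<partial>\<gamma>)"

definition crps_exp :: "real measure \<Rightarrow> real measure \<Rightarrow> ennreal" where
  "crps_exp \<gamma> M = (\<integral>\<^sup>+ y. crps_at \<gamma> (cdf M) y \<partial>M)"

definition std_normal_measure :: "real measure" where
  "std_normal_measure = density lborel std_normal_density"

definition std_normal_cdf :: "real \<Rightarrow> real" where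
  "std_normal_cdf x = measure std_normal_measure {..x}"

definition normal_measure :: "real \<Rightarrow> real \<Rightarrow> real measure" where
  "normal_measure \<mu> \<sigma> = density lborel (normal_density \<mu> \<sigma>)"

definition bvn_density :: "real \<Rightarrow> real \<Rightarrow> real \<Rightarrow> real \<Rightarrow> real \<Rightarrow> real \<times> real \<Rightarrow> real" where
  "bvn_density m1 m2 s11 s12 s22 z =
     (let d = s11 * s22 - s12\<^sup>2; a = fst z - m1; b = snd z - m2 in
      exp (- (s22 * a\<^sup>2 - 2 * s12 * a * b + s11 * b\<^sup>2) / (2 * d)) / (2 * pi * sqrt d))"

definition bvn_cdf :: "real \<times> real \<Rightarrow> real \<times> real \<Rightarrow> real \<times> real \<times> real \<Rightarrow> real" where
  "bvn_cdf z m S =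
     measure (density (lborel :: (real \<times> real) measure)
                (bvn_density (fst m) (snd m) (fst S) (fst (snd S)) (snd (snd S))))
             ({..fst z} \<times> {..snd z})"

definition gamma1 :: "real \<Rightarrow> real measure" where
  "gamma1 t = density lborel (\<lambda>u. ennreal (of_bool (t \<le> u)))"

definition gamma2 :: "real \<Rightarrow> real \<Rightarrow> real measure" where
  "gamma2 t s\<^sub>\<gamma> = density lborel (\<lambda>u. ennreal (std_normal_density ((u - t) / s\<^sub>\<gamma>) / s\<^sub>\<gamma>))"

end

theory Submission
  imports Defs
begin

lemma ae_cdf_lt1:
  assumes "real_distribution M"
  shows "AE y in M. \<forall>u<y. cdf M u < 1"
proof -
  interpret real_distribution M by fact
  have "AE y in M. \<forall>q\<in>\<rat>. cdf M q = 1 \<longrightarrow> y \<le> q"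
  proof (subst AE_ball_countable)
    show "countable (\<rat> :: real set)" by (rule countable_rat)
    show "\<forall>q\<in>\<rat>. AE y in M. cdf M q = 1 \<longrightarrow> y \<le> q"
    proof
      fix q :: real assume "q \<in> \<rat>"
      show "AE y in M. cdf M q = 1 \<longrightarrow> y \<le> q"
      proof (cases "cdf M q = 1")
        case True
        have "measure M {q<..} = 1 - cdf M q"
          using prob_compl[of "{..q}"] by (auto simp: cdf_def2 Compl_eq_Diff_UNIV[symmetric]
             intro: arg_cong[where f="measure M"])
        then have "emeasure M {q<..} = 0" using True by (simp add: emeasure_eq_measure)
        then have "AE y in M. y \<le> q"
          by (subst AE_iff_measurable[where N="{q<..}"]) (auto)
        then show ?thesis by auto
      qed simp
    qed
  qed
  then show ?thesis
  proof (rule AE_mp, intro AE_I2 impI allI)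
    fix y u assume H: "\<forall>q\<in>\<rat>. cdf M q = 1 \<longrightarrow> y \<le> q" and "u < y"
    show "cdf M u < 1"
    proof (rule ccontr)
      assume "\<not> cdf M u < 1"
      then have u1: "cdf M u = 1" using cdf_bounded_prob[of u] by linarith
      obtain q where q: "q \<in> \<rat>" "u < q" "q < y" using Rats_dense_in_real[OF \<open>u<y\<close>] by blast
      have "cdf M q = 1" using cdf_nondecreasing[of u q] cdf_bounded_prob[of q] q u1 by linarith
      then show False using H q by auto
    qed
  qed
qed

lemma ae_cdf_pos:
  assumes "real_distribution M"
  shows "AE y in M. 0 < cdf M y"
proof -
  interpret real_distribution M by fact
  define Z where "Z = {y. cdf M y = 0}"
  have A1: "AE y in M. \<forall>q\<in>\<rat>. cdf M q = 0 \<longrightarrow> q < y"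
  proof (subst AE_ball_countable)
    show "countable (\<rat> :: real set)" by (rule countable_rat)
    show "\<forall>q\<in>\<rat>. AE y in M. cdf M q = 0 \<longrightarrow> q < y"
    proof
      fix q :: real assume "q \<in> \<rat>"
      show "AE y in M. cdf M q = 0 \<longrightarrow> q < y"
      proof (cases "cdf M q = 0")
        case True
        then have "emeasure M {..q} = 0" by (simp add: emeasure_eq_measure cdf_def2)
        then have "AE y in M. q < y"
          by (subst AE_iff_measurable[where N="{..q}"]) (auto simp: not_less)
        then show ?thesis by auto
      qed simp
    qed
  qed
  show ?thesis
  proof (cases "Z = {}")
    case True
    show ?thesis using True cdf_nonneg by (intro AE_I2) (force simp: Z_def less_le)
  next
    case False
    have "eventually (\<lambda>x. cdf M x > 1/2) at_top"
      using cdf_lim_at_top_prob by (rule order_tendstoD) simp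
    then obtain b where b: "cdf M b > 1/2" by (auto simp: eventually_at_top_linorder)
    have Zb: "z \<in> Z \<Longrightarrow> z \<le> b" for z
      using cdf_nondecreasing[of b z] b by (force simp: Z_def)
    then have bdd: "bdd_above Z" by (meson bdd_aboveI)
    define s where "s = Sup Z"
    have A2: "AE y in M. cdf M s = 0 \<longrightarrow> y \<noteq> s"
    proof (cases "cdf M s = 0")
      case True
      have "emeasure M {s} \<le> emeasure M {..s}" by (rule emeasure_mono) auto
      also have "\<dots> = 0" using True by (simp add: emeasure_eq_measure cdf_def2)
      finally have "emeasure M {s} = 0" by simp
      then have "AE y in M. y \<noteq> s"
        by (subst AE_iff_measurable[where N="{s}"]) auto
      then show ?thesis by auto
    qed simp
    show ?thesis using A1 A2
    proof (eventually_elim)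
      case (elim y)
      show "0 < cdf M y"
      proof (rule ccontr)
        assume "\<not> 0 < cdf M y"
        then have y0: "cdf M y = 0" using cdf_nonneg[of y] by linarith
        then have "y \<in> Z" by (simp add: Z_def)
        then have "y \<le> s" unfolding s_def using bdd by (rule cSup_upper)
        moreover have "y \<noteq> s" using elim y0 by auto
        ultimately have "y < s" by simp
        then obtain z where z: "z \<in> Z" "y < z" using less_cSupD[OF False] s_def by blast
        obtain q where q: "q \<in> \<rat>" "y < q" "q < z" using Rats_dense_in_real[OF z(2)] by blast
        have "cdf M q = 0" using cdf_nondecreasing[of q z] cdf_nonneg[of q] q z by (simp add: Z_def)
        then show False using elim q by auto
      qed
    qed
  qed
qed


lemma inner_crps:
  assumes "real_distribution M"
  shows "(\<integral>\<^sup>+y. ennreal ((cdf M u - of_bool (y \<le> u))\<^sup>2) \<partial>M) = ennreal (cdf M u * (1 - cdf M u))"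
proof -
  interpret real_distribution M by fact
  let ?F = "cdf M u"
  have F0: "0 \<le> ?F" "?F \<le> 1" using cdf_nonneg cdf_bounded_prob by auto
  have "(\<integral>\<^sup>+y. ennreal ((?F - of_bool (y \<le> u))\<^sup>2) \<partial>M)
      = (\<integral>\<^sup>+y. ennreal (?F\<^sup>2) * indicator {u<..} y + ennreal ((1 - ?F)\<^sup>2) * indicator {..u} y \<partial>M)"
    by (intro nn_integral_cong) (auto split: split_indicator simp: power2_commute)
  also have "\<dots> = ennreal (?F\<^sup>2) * emeasure M {u<..} + ennreal ((1 - ?F)\<^sup>2) * emeasure M {..u}"
    by (subst nn_integral_add) (auto simp: nn_integral_cmult_indicator)
  also have "emeasure M {..u} = ennreal ?F" by (simp add: emeasure_eq_measure cdf_def2)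
  also have "emeasure M {u<..} = ennreal (1 - ?F)"
  proof -
    have "measure M {u<..} = 1 - ?F"
      using prob_compl[of "{..u}"] by (auto simp: cdf_def2 Compl_eq_Diff_UNIV[symmetric]
             intro: arg_cong[where f="measure M"])
    then show ?thesis by (simp add: emeasure_eq_measure)
  qed
  also have "ennreal (?F\<^sup>2) * ennreal (1 - ?F) + ennreal ((1 - ?F)\<^sup>2) * ennreal ?F
      = ennreal (?F\<^sup>2 * (1 - ?F) + (1 - ?F)\<^sup>2 * ?F)"
    using F0 by (simp add: ennreal_mult ennreal_plus)
  also have "?F\<^sup>2 * (1 - ?F) + (1 - ?F)\<^sup>2 * ?F = ?F * (1 - ?F)"
    by (simp add: power2_eq_square algebra_simps)
  finally show ?thesis .
qed

lemma part1:
  assumes RD: "real_distribution M" and SG: "sets \<gamma> = sets borel"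
  shows "crps_exp \<gamma> M = (\<integral>\<^sup>+ u. ennreal (cdf M u * (1 - cdf M u)) \<partial>\<gamma>)"
proof -
  interpret real_distribution M by fact
  define F where "F = cdf M"
  have F01: "0 \<le> F u" "F u \<le> 1" for u using cdf_nonneg cdf_bounded_prob by (auto simp: F_def)
  have Fmono: "mono F" unfolding mono_def F_def using cdf_nondecreasing by blast
  have Fmeas[measurable]: "F \<in> borel_measurable borel" by (rule borel_measurable_mono[OF Fmono])
  define g where "g u y = ennreal ((F u - of_bool (y \<le> u))\<^sup>2)" for u y
  have gmeas[measurable]: "(\<lambda>(y, u). g u y) \<in> borel_measurable (borel \<Otimes>\<^sub>M borel)"
    unfolding g_def by measurable
  have gmeas2[measurable]: "(\<lambda>u. g u y) \<in> borel_measurable borel" for y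
    unfolding g_def by measurable
  have crps: "crps_exp \<gamma> M = (\<integral>\<^sup>+y. \<integral>\<^sup>+u. g u y \<partial>\<gamma> \<partial>M)"
    unfolding crps_exp_def crps_at_def g_def F_def ..
  have spg: "space \<gamma> = UNIV" using sets_eq_imp_space_eq[OF SG] by simp
  define a where "a n = 1 / real (Suc (Suc n))" for n
  have apos: "0 < a n" "a n \<le> 1/2" for n by (auto simp: a_def field_simps)
  define Sn where "Sn n = {u. a n \<le> F u \<and> F u \<le> 1 - a n}" for n
  define S where "S = {u. 0 < F u \<and> F u < 1}"
  have Sn_meas[measurable]: "Sn n \<in> sets borel" for n unfolding Sn_def by measurable
  have S_meas[measurable]: "S \<in> sets borel" unfolding S_def by measurable
  have g_lb: "ennreal ((a n)\<^sup>2) \<le> g u y" if "u \<in> Sn n" for n u y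
  proof -
    have "(a n)\<^sup>2 \<le> (F u - of_bool (y \<le> u))\<^sup>2"
    proof (cases "y \<le> u")
      case True
      have "(a n)\<^sup>2 \<le> (1 - F u)\<^sup>2" using that apos[of n] by (intro power_mono) (auto simp: Sn_def)
      then show ?thesis using True by (simp add: power2_commute)
    next
      case False
      have "(a n)\<^sup>2 \<le> (F u)\<^sup>2" using that apos[of n] by (intro power_mono) (auto simp: Sn_def)
      then show ?thesis using False by simp
    qed
    then show ?thesis unfolding g_def by (rule ennreal_leI)
  qed
  have r_lb: "ennreal ((a n)\<^sup>2) \<le> ennreal (F u * (1 - F u))" if "u \<in> Sn n" for n u
    using that apos[of n] by (intro ennreal_leI) (auto simp: Sn_def power2_eq_square intro!: mult_mono)
  show ?thesis
  proof (cases "\<exists>n. emeasure \<gamma> (Sn n) = \<infinity>")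
    case True
    then obtain n where n: "emeasure \<gamma> (Sn n) = \<infinity>" by blast
    have a2: "0 < (a n)\<^sup>2" using apos[of n] by simp
    have big: "\<infinity> = (\<integral>\<^sup>+u. ennreal ((a n)\<^sup>2) * indicator (Sn n) u \<partial>\<gamma>)"
      using n a2 SG by (subst nn_integral_cmult_indicator) (auto simp: ennreal_mult_top)
    have L: "(\<integral>\<^sup>+u. g u y \<partial>\<gamma>) = \<infinity>" for y
    proof -
      have "(\<integral>\<^sup>+u. ennreal ((a n)\<^sup>2) * indicator (Sn n) u \<partial>\<gamma>) \<le> (\<integral>\<^sup>+u. g u y \<partial>\<gamma>)"
        by (intro nn_integral_mono) (auto split: split_indicator intro: g_lb)
      then show ?thesis using big by (simp add: top_unique)
    qed
    have R: "(\<integral>\<^sup>+u. ennreal (F u * (1 - F u)) \<partial>\<gamma>) = \<infinity>"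
    proof -
      have "(\<integral>\<^sup>+u. ennreal ((a n)\<^sup>2) * indicator (Sn n) u \<partial>\<gamma>) \<le> (\<integral>\<^sup>+u. ennreal (F u * (1 - F u)) \<partial>\<gamma>)"
        by (intro nn_integral_mono) (auto split: split_indicator intro: r_lb)
      then show ?thesis using big by (simp add: top_unique)
    qed
    have M1: "emeasure M UNIV = 1" using emeasure_space_1 unfolding space_eq_univ .
    have "crps_exp \<gamma> M = \<infinity> * emeasure M UNIV" unfolding crps L by simp
    also have "\<dots> = \<infinity>" unfolding M1 by simp
    finally have C: "crps_exp \<gamma> M = \<infinity>" .
    have R': "(\<integral>\<^sup>+u. ennreal (cdf M u * (1 - cdf M u)) \<partial>\<gamma>) = \<infinity>" using R unfolding F_def .
    show ?thesis using trans[OF C R'[symmetric]] .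
  next
    case False
    then have fin: "emeasure \<gamma> (Sn n) \<noteq> \<infinity>" for n by auto
    define \<nu> where "\<nu> = density \<gamma> (indicator S)"
    have sets_nu: "sets \<nu> = sets borel" using SG by (simp add: \<nu>_def)
    have sp_nu: "space \<nu> = UNIV" using spg by (simp add: \<nu>_def)
    have cover: "\<exists>n. u \<in> Sn n" if "u \<in> S" for u
    proof -
      define e where "e = min (F u) (1 - F u)"
      have "0 < e" using that by (auto simp: e_def S_def)
      then obtain n where n: "inverse (real (Suc n)) < e" using reals_Archimedean by blast
      have "a n \<le> inverse (real (Suc n))" by (auto simp: a_def field_simps)
      then have "a n \<le> e" using n by linarith
      then show ?thesis by (auto simp: Sn_def e_def)
    qed
    have sf: "sigma_finite_measure \<nu>"
      unfolding sigma_finite_measure_def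
    proof (intro exI[of _ "insert (-S) (range Sn)"] conjI)
      show "countable (insert (- S) (range Sn))" by simp
      have "- S \<in> sets borel" using S_meas by (rule borel_comp)
      then show "insert (- S) (range Sn) \<subseteq> sets \<nu>" unfolding sets_nu using Sn_meas by blast
      show "\<Union> (insert (- S) (range Sn)) = space \<nu>" unfolding sp_nu
      proof (intro set_eqI iffI)
        fix u :: real assume "u \<in> UNIV"
        show "u \<in> \<Union> (insert (- S) (range Sn))"
        proof (cases "u \<in> S")
          case True then obtain n where "u \<in> Sn n" using cover by blast
          then show ?thesis by blast
        qed blast
      qed simp
      show "\<forall>a\<in>insert (- S) (range Sn). emeasure \<nu> a \<noteq> \<infinity>"
      proof
        fix A assume "A \<in> insert (- S) (range Sn)"
        then show "emeasure \<nu> A \<noteq> \<infinity>"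
        proof
          assume "A = -S"
          have "-S \<in> sets \<gamma>" unfolding SG using S_meas by (rule borel_comp)
          then have "emeasure \<nu> A = (\<integral>\<^sup>+x. indicator S x * indicator (-S) x \<partial>\<gamma>)"
            unfolding \<nu>_def \<open>A = -S\<close> by (rule emeasure_density[rotated]) (unfold measurable_cong_sets[OF SG refl], measurable)
          also have "\<dots> = (\<integral>\<^sup>+x. 0 \<partial>\<gamma>)"
            by (intro nn_integral_cong) (auto simp: indicator_def)
          also have "\<dots> = 0" by simp
          finally show ?thesis by simp
        next
          assume "A \<in> range Sn"
          then obtain n where A: "A = Sn n" by auto
          have "Sn n \<in> sets \<gamma>" unfolding SG by (rule Sn_meas)
          then have "emeasure \<nu> A = (\<integral>\<^sup>+x. indicator S x * indicator (Sn n) x \<partial>\<gamma>)"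
            unfolding \<nu>_def A by (rule emeasure_density[rotated]) (unfold measurable_cong_sets[OF SG refl], measurable)
          also have "\<dots> \<le> (\<integral>\<^sup>+x. indicator (Sn n) x \<partial>\<gamma>)"
            by (intro nn_integral_mono) (simp split: split_indicator)
          also have "\<dots> = emeasure \<gamma> (Sn n)" using \<open>Sn n \<in> sets \<gamma>\<close> by (rule nn_integral_indicator)
          finally show ?thesis using fin[of n] by (auto simp: top_unique)
        qed
      qed
    qed
    interpret nu: sigma_finite_measure \<nu> by (rule sf)
    interpret pair_sigma_finite M \<nu> by unfold_locales
    have AEeq: "AE y in M. (\<integral>\<^sup>+u. g u y \<partial>\<gamma>) = (\<integral>\<^sup>+u. g u y \<partial>\<nu>)"
      using ae_cdf_pos[OF RD] ae_cdf_lt1[OF RD]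
    proof eventually_elim
      case (elim y)
      have "(\<integral>\<^sup>+u. g u y \<partial>\<nu>) = (\<integral>\<^sup>+u. indicator S u * g u y \<partial>\<gamma>)"
        unfolding \<nu>_def by (rule nn_integral_density; unfold measurable_cong_sets[OF SG refl], measurable)
      also have "\<dots> = (\<integral>\<^sup>+u. g u y \<partial>\<gamma>)"
      proof (intro nn_integral_cong)
        fix u
        show "indicator S u * g u y = g u y"
        proof (cases "u \<in> S")
          case False
          then have "F u = 0 \<or> F u = 1" using F01[of u] by (auto simp: S_def)
          then have "g u y = 0"
          proof
            assume u0: "F u = 0"
            have "\<not> y \<le> u"
            proof
              assume "y \<le> u" then have "F y \<le> F u" using Fmono by (auto simp: mono_def)
              then show False using u0 elim by (simp add: F_def)
            qed
            then show ?thesis using u0 by (simp add: g_def)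
          next
            assume u1: "F u = 1"
            have "y \<le> u"
            proof (rule ccontr)
              assume "\<not> y \<le> u"
              then have "u < y" by simp
              then have "cdf M u < 1" using elim(2) by blast
              then show False using u1 unfolding F_def by simp
            qed
            then show ?thesis using u1 by (simp add: g_def)
          qed
          then show ?thesis by simp
        qed simp
      qed
      finally show ?case ..
    qed
    have "crps_exp \<gamma> M = (\<integral>\<^sup>+y. \<integral>\<^sup>+u. g u y \<partial>\<nu> \<partial>M)"
      unfolding crps using AEeq by (rule nn_integral_cong_AE)
    also have "\<dots> = (\<integral>\<^sup>+u. \<integral>\<^sup>+y. g u y \<partial>M \<partial>\<nu>)"
    proof (rule Fubini'[of "\<lambda>y u. g u y", symmetric])
      have sM: "sets M = sets borel" by (rule events_eq_borel)
      have sP: "sets (M \<Otimes>\<^sub>M \<nu>) = sets (borel \<Otimes>\<^sub>M borel)"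
        by (rule sets_pair_measure_cong[OF sM sets_nu])
      show "(\<lambda>(y, u). g u y) \<in> borel_measurable (M \<Otimes>\<^sub>M \<nu>)"
        unfolding measurable_cong_sets[OF sP refl] by (rule gmeas)
    qed
    also have "\<dots> = (\<integral>\<^sup>+u. ennreal (F u * (1 - F u)) \<partial>\<nu>)"
      unfolding g_def F_def by (intro nn_integral_cong) (rule inner_crps[OF RD])
    also have "\<dots> = (\<integral>\<^sup>+u. indicator S u * ennreal (F u * (1 - F u)) \<partial>\<gamma>)"
      unfolding \<nu>_def by (rule nn_integral_density; unfold measurable_cong_sets[OF SG refl], measurable)
    also have "\<dots> = (\<integral>\<^sup>+u. ennreal (F u * (1 - F u)) \<partial>\<gamma>)"
    proof (intro nn_integral_cong)
      fix u
      show "indicator S u * ennreal (F u * (1 - F u)) = ennreal (F u * (1 - F u))"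
      proof (cases "u \<in> S")
        case False
        then have "F u = 0 \<or> F u = 1" using F01[of u] by (auto simp: S_def)
        then show ?thesis by auto
      qed simp
    qed
    finally have "crps_exp \<gamma> M = (\<integral>\<^sup>+u. ennreal (F u * (1 - F u)) \<partial>\<gamma>)" .
    then show ?thesis unfolding F_def .
  qed
qed

lemma std_rd: "real_distribution std_normal_measure"
  unfolding std_normal_measure_def real_distribution_def real_distribution_axioms_def
  using prob_space_normal_density by auto

lemma Phi_cdf: "std_normal_cdf = cdf std_normal_measure"
  by (simp add: fun_eq_iff std_normal_cdf_def cdf_def)

lemma Phi_nonneg: "0 \<le> std_normal_cdf x"
proof -
  interpret real_distribution std_normal_measure by (rule std_rd)
  show ?thesis unfolding Phi_cdf by (rule cdf_nonneg)
qed

lemma Phi_le1: "std_normal_cdf x \<le> 1"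
proof -
  interpret real_distribution std_normal_measure by (rule std_rd)
  show ?thesis unfolding Phi_cdf by (rule cdf_bounded_prob)
qed

lemma Phi_mono: "x \<le> y \<Longrightarrow> std_normal_cdf x \<le> std_normal_cdf y"
proof -
  interpret real_distribution std_normal_measure by (rule std_rd)
  show "x \<le> y \<Longrightarrow> std_normal_cdf x \<le> std_normal_cdf y" unfolding Phi_cdf by (rule cdf_nondecreasing)
qed

lemma Phi_top: "(std_normal_cdf \<longlongrightarrow> 1) at_top"
proof -
  interpret real_distribution std_normal_measure by (rule std_rd)
  show ?thesis unfolding Phi_cdf by (rule cdf_lim_at_top_prob)
qed

lemma Phi_bot: "(std_normal_cdf \<longlongrightarrow> 0) at_bot"
proof -
  interpret real_distribution std_normal_measure by (rule std_rd)
  show ?thesis unfolding Phi_cdf by (rule cdf_lim_at_bot)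
qed

lemma phi_cont: "continuous_on A std_normal_density"
  unfolding normal_density_def by (intro continuous_intros) auto

lemma phi_isCont: "isCont std_normal_density x"
  using phi_cont[of UNIV] by (simp add: continuous_on_eq_continuous_at)

lemma emeasure_std: "emeasure std_normal_measure A = (\<integral>\<^sup>+x. ennreal (std_normal_density x) * indicator A x \<partial>lborel)"
  if "A \<in> sets borel" for A
  unfolding std_normal_measure_def using that by (subst emeasure_density) auto

lemma Phi_integral:
  assumes "a \<le> y"
  shows "std_normal_cdf y = std_normal_cdf a + integral {a..y} std_normal_density"
proof (cases "a = y")
  case True then show ?thesis by simp
next
  case False
  then have ay: "a < y" using assms by simp
  have int: "(std_normal_density has_integral integral {a..y} std_normal_density) {a<..<y}"
    unfolding has_integral_Icc_iff_Ioo[symmetric]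
    by (rule integrable_integral[OF integrable_continuous_interval[OF phi_cont]])
  have "ennreal (std_normal_cdf y - std_normal_cdf a) = emeasure std_normal_measure {a<..y}"
  proof -
    interpret real_distribution std_normal_measure by (rule std_rd)
    show ?thesis using cdf_diff_eq[OF ay] unfolding Phi_cdf emeasure_eq_measure by simp
  qed
  also have "\<dots> = (\<integral>\<^sup>+x. ennreal (std_normal_density x) * indicator {a<..y} x \<partial>lborel)"
    by (rule emeasure_std) simp
  also have "\<dots> = (\<integral>\<^sup>+x. ennreal (std_normal_density x) * indicator {a<..<y} x \<partial>lborel)"
    using AE_lborel_singleton[of y] by (intro nn_integral_cong_AE) (auto split: split_indicator)
  also have "\<dots> = ennreal (integral {a..y} std_normal_density)"
    by (rule nn_integral_has_integral_lebesgue'[OF _ int]) simp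
  finally have "ennreal (std_normal_cdf y - std_normal_cdf a) = ennreal (integral {a..y} std_normal_density)" .
  moreover have "0 \<le> integral {a..y} std_normal_density"
    using assms by (intro integral_nonneg integrable_continuous_interval phi_cont) auto
  moreover have "std_normal_cdf a \<le> std_normal_cdf y" using assms by (rule Phi_mono)
  ultimately show ?thesis by (simp add: ennreal_inj)
qed

lemma DERIV_Phi: "(std_normal_cdf has_real_derivative std_normal_density x) (at x)"
proof -
  let ?a = "x - 1" and ?b = "x + 1"
  have "((\<lambda>y. integral {?a..y} std_normal_density) has_real_derivative std_normal_density x) (at x within {?a..?b})"
    by (rule integral_has_real_derivative[OF phi_cont]) auto
  then have "((\<lambda>y. integral {?a..y} std_normal_density) has_real_derivative std_normal_density x) (at x within {?a<..<?b})"
    by (rule DERIV_subset) auto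
  moreover have "at x within {?a<..<?b} = at x" by (rule at_within_open) auto
  ultimately have "((\<lambda>y. integral {?a..y} std_normal_density) has_real_derivative std_normal_density x) (at x)"
    by simp
  then have "((\<lambda>y. std_normal_cdf ?a + integral {?a..y} std_normal_density) has_real_derivative 0 + std_normal_density x) (at x)"
    by (rule DERIV_add[OF DERIV_const])
  then have "((\<lambda>y. std_normal_cdf ?a + integral {?a..y} std_normal_density) has_real_derivative std_normal_density x) (at x)"
    by simp
  then show ?thesis
  proof (rule has_field_derivative_transform_within_open[where S="{?a<..<?b}"])
    show "std_normal_cdf ?a + integral {?a..y} std_normal_density = std_normal_cdf y" if "y \<in> {?a<..<?b}" for y
      using Phi_integral[of ?a y] that by simp
  qed (simp_all)
qed

lemma DERIV_phi: "(std_normal_density has_real_derivative (- x * std_normal_density x)) (at x)"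
  unfolding normal_density_def
  by (auto intro!: derivative_eq_intros simp: field_simps power2_eq_square)

lemma Phi_neg: "std_normal_cdf (- x) = 1 - std_normal_cdf x"
proof -
  define h where "h x = std_normal_cdf (- x) + std_normal_cdf x" for x
  have d: "(h has_real_derivative 0) (at y)" for y
  proof -
    have "((\<lambda>z. std_normal_cdf (- z)) has_real_derivative std_normal_density (-y) * (-1)) (at y)"
      by (rule DERIV_chain2[OF DERIV_Phi DERIV_minus[OF DERIV_ident]])
    then have "(h has_real_derivative (std_normal_density (-y) * (-1) + std_normal_density y)) (at y)"
      unfolding h_def by (rule DERIV_add[OF _ DERIV_Phi])
    moreover have "std_normal_density (-y) = std_normal_density y" by (simp add: normal_density_def)
    ultimately show ?thesis by simp
  qed
  have c: "h y = h 0" for y using DERIV_isconst_all d by blast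
  have "(h \<longlongrightarrow> 0 + 1) at_top"
    unfolding h_def by (intro tendsto_add filterlim_compose[OF Phi_bot] filterlim_uminus_at_bot_at_top Phi_top)
  moreover have "h = (\<lambda>_. h 0)" using c by (simp add: fun_eq_iff)
  then have "(h \<longlongrightarrow> h 0) at_top" by (metis tendsto_const)
  ultimately have "h 0 = 1" using tendsto_unique by force
  then show ?thesis using c[of x] by (simp add: h_def)
qed

lemma nd_affine: "0 < \<sigma> \<Longrightarrow> normal_density m \<sigma> (m + \<sigma> * x) = std_normal_density x / \<sigma>"
  unfolding normal_density_def
  by (simp add: real_sqrt_mult power_mult_distrib field_simps)

lemma nn_integral_nd_le:
  assumes "0 < \<sigma>"
  shows "(\<integral>\<^sup>+x. ennreal (normal_density m \<sigma> x) * indicator {..c} x \<partial>lborel) = ennreal (std_normal_cdf ((c - m) / \<sigma>))"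
proof -
  have "(\<integral>\<^sup>+x. ennreal (normal_density m \<sigma> x) * indicator {..c} x \<partial>lborel)
      = ennreal \<bar>\<sigma>\<bar> * (\<integral>\<^sup>+x. ennreal (normal_density m \<sigma> (m + \<sigma> * x)) * indicator {..c} (m + \<sigma> * x) \<partial>lborel)"
    using assms by (intro nn_integral_real_affine) auto
  also have "\<dots> = ennreal \<sigma> * (\<integral>\<^sup>+x. ennreal (1 / \<sigma>) * (ennreal (std_normal_density x) * indicator {..(c - m) / \<sigma>} x) \<partial>lborel)"
  proof -
    have "ennreal (normal_density m \<sigma> (m + \<sigma> * x)) * indicator {..c} (m + \<sigma> * x)
        = ennreal (1 / \<sigma>) * (ennreal (std_normal_density x) * indicator {..(c - m) / \<sigma>} x)" for x
    proof -
      have "(m + \<sigma> * x \<le> c) = (x \<le> (c - m) / \<sigma>)" using assms by (simp add: field_simps)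
      then show ?thesis using assms
        by (simp add: nd_affine indicator_def ennreal_mult[symmetric] divide_inverse mult.commute)
    qed
    then show ?thesis using assms by simp
  qed
  also have "\<dots> = ennreal \<sigma> * ennreal (1 / \<sigma>) * (\<integral>\<^sup>+x. ennreal (std_normal_density x) * indicator {..(c - m) / \<sigma>} x \<partial>lborel)"
    by (subst nn_integral_cmult) (auto simp: mult.assoc)
  also have "ennreal \<sigma> * ennreal (1 / \<sigma>) = 1"
    using assms by (simp add: ennreal_mult[symmetric])
  also have "(\<integral>\<^sup>+x. ennreal (std_normal_density x) * indicator {..(c - m) / \<sigma>} x \<partial>lborel)
      = emeasure std_normal_measure {..(c - m) / \<sigma>}"
    by (rule emeasure_std[symmetric]) simp
  also have "\<dots> = ennreal (std_normal_cdf ((c - m) / \<sigma>))"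
  proof -
    interpret real_distribution std_normal_measure by (rule std_rd)
    show ?thesis by (simp add: emeasure_eq_measure std_normal_cdf_def)
  qed
  finally show ?thesis by simp
qed

lemma normal_rd: "0 < \<sigma> \<Longrightarrow> real_distribution (normal_measure \<mu> \<sigma>)"
  unfolding normal_measure_def real_distribution_def real_distribution_axioms_def
  using prob_space_normal_density by auto

lemma cdf_normal:
  assumes "0 < \<sigma>"
  shows "cdf (normal_measure \<mu> \<sigma>) u = std_normal_cdf ((u - \<mu>) / \<sigma>)"
proof -
  interpret real_distribution "normal_measure \<mu> \<sigma>" by (rule normal_rd[OF assms])
  have "ennreal (cdf (normal_measure \<mu> \<sigma>) u) = emeasure (normal_measure \<mu> \<sigma>) {..u}"
    by (simp add: cdf_def emeasure_eq_measure)
  also have "\<dots> = (\<integral>\<^sup>+x. ennreal (normal_density \<mu> \<sigma> x) * indicator {..u} x \<partial>lborel)"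
    unfolding normal_measure_def by (subst emeasure_density) auto
  also have "\<dots> = ennreal (std_normal_cdf ((u - \<mu>) / \<sigma>))" by (rule nn_integral_nd_le[OF assms])
  finally show ?thesis using cdf_nonneg Phi_nonneg by (simp add: ennreal_inj)
qed

lemma Phi_meas[measurable]: "std_normal_cdf \<in> borel_measurable borel"
  by (rule borel_measurable_mono) (auto simp: mono_def intro: Phi_mono)

lemma DERIV_Phi_chain[derivative_intros]:
  "(f has_real_derivative f') (at x within s) \<Longrightarrow>
   ((\<lambda>x. std_normal_cdf (f x)) has_real_derivative std_normal_density (f x) * f') (at x within s)"
  by (rule DERIV_chain2[OF DERIV_Phi])

lemma DERIV_phi_chain[derivative_intros]:
  "(f has_real_derivative f') (at x within s) \<Longrightarrow>
   ((\<lambda>x. std_normal_density (f x)) has_real_derivative (- f x * std_normal_density (f x)) * f') (at x within s)"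
  by (rule DERIV_chain2[OF DERIV_phi])

lemma Phi_compl_emeasure: "emeasure std_normal_measure {z<..} = ennreal (1 - std_normal_cdf z)"
proof -
  interpret real_distribution std_normal_measure by (rule std_rd)
  have "measure std_normal_measure {z<..} = 1 - std_normal_cdf z"
    using prob_compl[of "{..z}"] by (auto simp: std_normal_cdf_def Compl_eq_Diff_UNIV[symmetric]
             intro: arg_cong[where f="measure std_normal_measure"])
  then show ?thesis by (simp add: emeasure_eq_measure)
qed

lemma phi_lim: "(std_normal_density \<longlongrightarrow> 0) at_top"
proof -
  have "filterlim (\<lambda>x::real. x\<^sup>2 / 2) at_top at_top"
  proof (rule filterlim_at_top_mono[OF filterlim_ident])
    show "\<forall>\<^sub>F x in at_top. (x::real) \<le> x\<^sup>2 / 2"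
      using eventually_ge_at_top[of "2::real"]
      by eventually_elim (simp add: power2_eq_square field_simps mult_right_mono)
  qed
  then have "filterlim (\<lambda>x::real. - (x\<^sup>2 / 2)) at_bot at_top"
    by (simp add: filterlim_uminus_at_bot)
  then have "((\<lambda>x::real. exp (- (x\<^sup>2 / 2))) \<longlongrightarrow> 0) at_top"
    by (rule filterlim_compose[OF exp_at_bot])
  then have "((\<lambda>x::real. (1 / sqrt (2 * pi)) * exp (- (x\<^sup>2 / 2))) \<longlongrightarrow> (1 / sqrt (2 * pi)) * 0) at_top"
    by (intro tendsto_mult tendsto_const)
  moreover have "std_normal_density = (\<lambda>x::real. (1 / sqrt (2 * pi)) * exp (- (x\<^sup>2 / 2)))"
    by (rule ext) (simp add: std_normal_density_def)
  ultimately show ?thesis by simp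
qed

lemma mills:
  assumes z: "0 < z"
  shows "z * (1 - std_normal_cdf z) \<le> std_normal_density z"
proof -
  have lim: "((\<lambda>x. - std_normal_density x / z) \<longlongrightarrow> 0) at_top"
    using tendsto_divide[OF tendsto_minus[OF phi_lim] tendsto_const[of z]] z by simp
  have "ennreal (1 - std_normal_cdf z) = (\<integral>\<^sup>+x. ennreal (std_normal_density x) * indicator {z<..} x \<partial>lborel)"
    by (simp add: Phi_compl_emeasure[symmetric] emeasure_std)
  also have "\<dots> \<le> (\<integral>\<^sup>+x. ennreal (x * std_normal_density x / z) * indicator {z..} x \<partial>lborel)"
  proof (intro nn_integral_mono)
    fix x
    show "ennreal (std_normal_density x) * indicator {z<..} x \<le> ennreal (x * std_normal_density x / z) * indicator {z..} x"
    proof (cases "z < x")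
      case True
      then have "std_normal_density x \<le> x * std_normal_density x / z"
        using z by (simp add: field_simps mult_right_mono)
      then show ?thesis using True by (auto intro: ennreal_leI)
    qed simp
  qed
  also have "\<dots> = ennreal (0 - (- std_normal_density z / z))"
  proof (rule nn_integral_FTC_atLeast[where F="\<lambda>x. - std_normal_density x / z" and f="\<lambda>x. x * std_normal_density x / z" and T=0])
    show "(\<lambda>x. x * std_normal_density x / z) \<in> borel_measurable borel" by measurable
    show "((\<lambda>x. - std_normal_density x / z) has_real_derivative x * std_normal_density x / z) (at x)" for x
      using z by (auto intro!: derivative_eq_intros simp: field_simps)
    show "0 \<le> x * std_normal_density x / z" if "z \<le> x" for x using that z by simp
  qed (rule lim)
  finally have "1 - std_normal_cdf z \<le> std_normal_density z / z"
    using z by (subst (asm) ennreal_le_iff) auto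
  then show ?thesis using z by (simp add: field_simps)
qed

definition Kf :: "real \<Rightarrow> real" where
  "Kf tt = tt * (std_normal_cdf tt)\<^sup>2 - tt * std_normal_cdf tt + 1 / sqrt pi
              - 1 / sqrt pi * std_normal_cdf (tt * sqrt 2)
              + 2 * std_normal_density tt * std_normal_cdf tt - std_normal_density tt"

lemma phi_sq: "std_normal_density (z * sqrt 2) * sqrt 2 / sqrt pi = 2 * (std_normal_density z)\<^sup>2"
proof -
  have "std_normal_density (z * sqrt 2) * sqrt 2 / sqrt pi = exp (- z\<^sup>2) / pi"
    by (simp add: std_normal_density_def power_mult_distrib real_sqrt_mult field_simps)
  also have "\<dots> = 2 * (std_normal_density z)\<^sup>2"
    by (simp add: std_normal_density_def power_mult_distrib power_divide exp_double[symmetric] real_sqrt_mult field_simps)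
  finally show ?thesis .
qed

lemma DERIV_K: "((\<lambda>z. - Kf z) has_real_derivative std_normal_cdf z * (1 - std_normal_cdf z)) (at z)"
proof -
  have e: "std_normal_density (z * sqrt 2) = 2 * (std_normal_density z)\<^sup>2 * sqrt pi / sqrt 2"
    using phi_sq[of z] by (simp add: field_simps)
  show ?thesis
  unfolding Kf_def
  apply (rule derivative_eq_intros refl | rule DERIV_Phi DERIV_phi)+
  apply (simp only: e)
  apply (simp add: power2_eq_square field_simps)
  done
qed

lemma tail_lim: "((\<lambda>z. z * (1 - std_normal_cdf z)) \<longlongrightarrow> 0) at_top"
proof (rule tendsto_sandwich[OF _ _ tendsto_const phi_lim])
  show "\<forall>\<^sub>F z in at_top. 0 \<le> z * (1 - std_normal_cdf z)"
    using eventually_ge_at_top[of "0::real"] by eventually_elim (simp add: Phi_le1)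
  show "\<forall>\<^sub>F z in at_top. z * (1 - std_normal_cdf z) \<le> std_normal_density z"
    using eventually_gt_at_top[of "0::real"] by eventually_elim (rule mills)
qed

lemma Phi_sqrt2_lim: "((\<lambda>z. std_normal_cdf (z * sqrt 2)) \<longlongrightarrow> 1) at_top"
proof (rule filterlim_compose[OF Phi_top])
  show "filterlim (\<lambda>z::real. z * sqrt 2) at_top at_top"
    by (rule filterlim_at_top_mult_tendsto_pos[OF tendsto_const]) (auto intro: filterlim_ident)
qed

lemma K_lim: "((\<lambda>z. - Kf z) \<longlongrightarrow> 0) at_top"
proof -
  have eq: "- Kf z = std_normal_cdf z * (z * (1 - std_normal_cdf z)) - (1 / sqrt pi) * (1 - std_normal_cdf (z * sqrt 2))
      - 2 * std_normal_density z * std_normal_cdf z + std_normal_density z" for z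
    unfolding Kf_def by (simp add: power2_eq_square algebra_simps)
  have "((\<lambda>z. std_normal_cdf z * (z * (1 - std_normal_cdf z)) - (1 / sqrt pi) * (1 - std_normal_cdf (z * sqrt 2))
      - 2 * std_normal_density z * std_normal_cdf z + std_normal_density z) \<longlongrightarrow>
      1 * 0 - (1 / sqrt pi) * (1 - 1) - 2 * 0 * 1 + 0) at_top"
    by (intro tendsto_intros Phi_top tail_lim Phi_sqrt2_lim phi_lim)
  then show ?thesis unfolding eq by simp
qed

lemma K_FTC: "(\<integral>\<^sup>+x. ennreal (std_normal_cdf x * (1 - std_normal_cdf x)) * indicator {a..} x \<partial>lborel) = ennreal (Kf a)"
proof -
  have "(\<integral>\<^sup>+x. ennreal (std_normal_cdf x * (1 - std_normal_cdf x)) * indicator {a..} x \<partial>lborel) = ennreal (0 - (- Kf a))"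
  proof (rule nn_integral_FTC_atLeast[where F="\<lambda>z. - Kf z" and f="\<lambda>x. std_normal_cdf x * (1 - std_normal_cdf x)" and T=0])
    show "(\<lambda>x. std_normal_cdf x * (1 - std_normal_cdf x)) \<in> borel_measurable borel" by measurable
    show "((\<lambda>z. - Kf z) has_real_derivative std_normal_cdf x * (1 - std_normal_cdf x)) (at x)" for x
      by (rule DERIV_K)
    show "0 \<le> std_normal_cdf x * (1 - std_normal_cdf x)" for x using Phi_nonneg[of x] Phi_le1[of x] by simp
  qed (rule K_lim)
  then show ?thesis by simp
qed

lemma sets_gamma1: "sets (gamma1 t) = sets borel"
  by (simp add: gamma1_def)

lemma Kf_nonneg: "0 \<le> Kf a"
proof -
  have mono: "- Kf a \<le> - Kf y" if "a \<le> y" for y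
  proof (rule DERIV_nonneg_imp_nondecreasing[OF that])
    fix x show "\<exists>d. ((\<lambda>z. - Kf z) has_real_derivative d) (at x) \<and> 0 \<le> d"
      using DERIV_K[of x] Phi_nonneg[of x] Phi_le1[of x] by auto
  qed
  have "- Kf a \<le> 0"
    by (rule tendsto_lowerbound[OF K_lim]) (use mono in \<open>auto simp: eventually_at_top_linorder intro!: exI[of _ a]\<close>)
  then show ?thesis by simp
qed

lemma crps_gamma1:
  assumes "0 < \<sigma>"
  shows "crps_exp (gamma1 t) (normal_measure \<mu> \<sigma>) = ennreal (\<sigma> * Kf ((t - \<mu>) / \<sigma>))"
proof -
  let ?F = "\<lambda>u. std_normal_cdf ((u - \<mu>) / \<sigma>)"
  have "crps_exp (gamma1 t) (normal_measure \<mu> \<sigma>)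
      = (\<integral>\<^sup>+u. ennreal (cdf (normal_measure \<mu> \<sigma>) u * (1 - cdf (normal_measure \<mu> \<sigma>) u)) \<partial>gamma1 t)"
    by (rule part1[OF normal_rd[OF assms] sets_gamma1])
  also have "\<dots> = (\<integral>\<^sup>+u. ennreal (?F u * (1 - ?F u)) \<partial>gamma1 t)"
    using assms by (simp add: cdf_normal)
  also have "\<dots> = (\<integral>\<^sup>+u. ennreal (of_bool (t \<le> u)) * ennreal (?F u * (1 - ?F u)) \<partial>lborel)"
    unfolding gamma1_def by (rule nn_integral_density) measurable
  also have "\<dots> = (\<integral>\<^sup>+u. ennreal (?F u * (1 - ?F u)) * indicator {t..} u \<partial>lborel)"
    by (intro nn_integral_cong) (auto split: split_indicator)
  also have "\<dots> = ennreal \<bar>\<sigma>\<bar> * (\<integral>\<^sup>+z. ennreal (?F (\<mu> + \<sigma> * z) * (1 - ?F (\<mu> + \<sigma> * z))) * indicator {t..} (\<mu> + \<sigma> * z) \<partial>lborel)"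
    using assms by (intro nn_integral_real_affine) auto
  also have "\<dots> = ennreal \<sigma> * (\<integral>\<^sup>+z. ennreal (std_normal_cdf z * (1 - std_normal_cdf z)) * indicator {(t - \<mu>) / \<sigma>..} z \<partial>lborel)"
  proof -
    have "ennreal (?F (\<mu> + \<sigma> * z) * (1 - ?F (\<mu> + \<sigma> * z))) * indicator {t..} (\<mu> + \<sigma> * z)
        = ennreal (std_normal_cdf z * (1 - std_normal_cdf z)) * indicator {(t - \<mu>) / \<sigma>..} z" for z
    proof -
      have "(t \<le> \<mu> + \<sigma> * z) = ((t - \<mu>) / \<sigma> \<le> z)" using assms by (simp add: field_simps)
      moreover have "(\<mu> + \<sigma> * z - \<mu>) / \<sigma> = z" using assms by simp
      ultimately show ?thesis by (simp add: indicator_def)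
    qed
    then show ?thesis using assms by simp
  qed
  also have "\<dots> = ennreal \<sigma> * ennreal (Kf ((t - \<mu>) / \<sigma>))" by (simp add: K_FTC)
  also have "\<dots> = ennreal (\<sigma> * Kf ((t - \<mu>) / \<sigma>))" using assms Kf_nonneg by (simp add: ennreal_mult)
  finally show ?thesis .
qed

lemma sets_N: "sets std_normal_measure = sets borel"
  by (simp add: std_normal_measure_def)

lemma emeasure_N_le: "emeasure std_normal_measure {..s} = ennreal (std_normal_cdf s)"
proof -
  interpret real_distribution std_normal_measure by (rule std_rd)
  show ?thesis by (simp add: emeasure_eq_measure std_normal_cdf_def)
qed

lemma max_as_integral:
  "ennreal (max 0 (y - max x tt)) = (\<integral>\<^sup>+s. (of_bool (tt \<le> s \<and> x \<le> s \<and> s < y) :: ennreal) \<partial>lborel)"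
proof -
  have "(\<integral>\<^sup>+s. (of_bool (tt \<le> s \<and> x \<le> s \<and> s < y) :: ennreal) \<partial>lborel)
      = (\<integral>\<^sup>+s. indicator {max x tt..<y} s \<partial>lborel)"
    by (intro nn_integral_cong) (auto simp: indicator_def)
  also have "\<dots> = emeasure lborel {max x tt..<y}" by simp
  also have "\<dots> = ennreal (max 0 (y - max x tt))"
    by (cases "max x tt \<le> y") (auto simp: max_def)
  finally show ?thesis ..
qed

lemma NN_integral:
  "(\<integral>\<^sup>+z. ennreal (max 0 (snd z - max (fst z) tt)) \<partial>(std_normal_measure \<Otimes>\<^sub>M std_normal_measure))
    = ennreal (Kf tt)"
proof -
  let ?N = std_normal_measure
  interpret N: prob_space ?N using std_rd by (simp add: real_distribution_def)
  interpret NN: pair_sigma_finite ?N ?N by unfold_locales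
  interpret NL: pair_sigma_finite ?N lborel by unfold_locales
  have sNN: "sets (?N \<Otimes>\<^sub>M ?N) = sets (borel \<Otimes>\<^sub>M borel)"
    by (rule sets_pair_measure_cong[OF sets_N sets_N])
  have sNL: "sets (?N \<Otimes>\<^sub>M lborel) = sets (borel \<Otimes>\<^sub>M borel)"
    by (rule sets_pair_measure_cong[OF sets_N]) simp
  define H where "H x y s = (of_bool (tt \<le> s \<and> x \<le> s \<and> s < y) :: ennreal)" for x y s
  have "(\<integral>\<^sup>+z. ennreal (max 0 (snd z - max (fst z) tt)) \<partial>(?N \<Otimes>\<^sub>M ?N))
      = (\<integral>\<^sup>+x. \<integral>\<^sup>+y. ennreal (max 0 (snd (x, y) - max (fst (x, y)) tt)) \<partial>?N \<partial>?N)"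
  proof (rule N.nn_integral_fst[symmetric])
    show "(\<lambda>z. ennreal (max 0 (snd z - max (fst z) tt))) \<in> borel_measurable (?N \<Otimes>\<^sub>M ?N)"
      unfolding measurable_cong_sets[OF sNN refl] by measurable
  qed
  also have "\<dots> = (\<integral>\<^sup>+x. \<integral>\<^sup>+y. \<integral>\<^sup>+s. H x y s \<partial>lborel \<partial>?N \<partial>?N)"
    unfolding H_def by (simp only: fst_conv snd_conv max_as_integral)
  also have "\<dots> = (\<integral>\<^sup>+x. \<integral>\<^sup>+s. \<integral>\<^sup>+y. H x y s \<partial>?N \<partial>lborel \<partial>?N)"
  proof (intro nn_integral_cong)
    fix x
    show "(\<integral>\<^sup>+y. \<integral>\<^sup>+s. H x y s \<partial>lborel \<partial>?N) = (\<integral>\<^sup>+s. \<integral>\<^sup>+y. H x y s \<partial>?N \<partial>lborel)"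
    proof (rule NL.Fubini'[symmetric])
      show "(\<lambda>(y, s). H x y s) \<in> borel_measurable (?N \<Otimes>\<^sub>M lborel)"
        unfolding measurable_cong_sets[OF sNL refl] H_def by measurable
    qed
  qed
  also have "\<dots> = (\<integral>\<^sup>+x. \<integral>\<^sup>+s. (of_bool (tt \<le> s \<and> x \<le> s) :: ennreal) * ennreal (1 - std_normal_cdf s) \<partial>lborel \<partial>?N)"
  proof (intro nn_integral_cong)
    fix x s
    have "(\<integral>\<^sup>+y. H x y s \<partial>?N) = (\<integral>\<^sup>+y. (of_bool (tt \<le> s \<and> x \<le> s) :: ennreal) * indicator {s<..} y \<partial>?N)"
      unfolding H_def by (intro nn_integral_cong) (auto simp: indicator_def)
    also have "\<dots> = (of_bool (tt \<le> s \<and> x \<le> s) :: ennreal) * emeasure ?N {s<..}"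
      by (rule nn_integral_cmult_indicator) (simp add: sets_N)
    finally show "(\<integral>\<^sup>+y. H x y s \<partial>?N) = (of_bool (tt \<le> s \<and> x \<le> s) :: ennreal) * ennreal (1 - std_normal_cdf s)"
      by (simp add: Phi_compl_emeasure)
  qed
  also have "\<dots> = (\<integral>\<^sup>+s. \<integral>\<^sup>+x. (of_bool (tt \<le> s \<and> x \<le> s) :: ennreal) * ennreal (1 - std_normal_cdf s) \<partial>?N \<partial>lborel)"
  proof (rule NL.Fubini'[of "\<lambda>x s. (of_bool (tt \<le> s \<and> x \<le> s) :: ennreal) * ennreal (1 - std_normal_cdf s)", symmetric])
    show "(\<lambda>(x, s). (of_bool (tt \<le> s \<and> x \<le> s) :: ennreal) * ennreal (1 - std_normal_cdf s)) \<in> borel_measurable (?N \<Otimes>\<^sub>M lborel)"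
      unfolding measurable_cong_sets[OF sNL refl] by measurable
  qed
  also have "\<dots> = (\<integral>\<^sup>+s. ennreal (std_normal_cdf s * (1 - std_normal_cdf s)) * indicator {tt..} s \<partial>lborel)"
  proof (intro nn_integral_cong)
    fix s
    have "(\<integral>\<^sup>+x. (of_bool (tt \<le> s \<and> x \<le> s) :: ennreal) * ennreal (1 - std_normal_cdf s) \<partial>?N)
        = (\<integral>\<^sup>+x. ((of_bool (tt \<le> s) :: ennreal) * ennreal (1 - std_normal_cdf s)) * indicator {..s} x \<partial>?N)"
      by (intro nn_integral_cong) (auto simp: indicator_def)
    also have "\<dots> = ((of_bool (tt \<le> s) :: ennreal) * ennreal (1 - std_normal_cdf s)) * emeasure ?N {..s}"
      by (rule nn_integral_cmult_indicator) (simp add: sets_N)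
    also have "\<dots> = ennreal (std_normal_cdf s * (1 - std_normal_cdf s)) * indicator {tt..} s"
      using Phi_nonneg[of s] Phi_le1[of s]
      by (simp add: emeasure_N_le indicator_def ennreal_mult mult.commute)
    finally show "(\<integral>\<^sup>+x. (of_bool (tt \<le> s \<and> x \<le> s) :: ennreal) * ennreal (1 - std_normal_cdf s) \<partial>?N)
        = ennreal (std_normal_cdf s * (1 - std_normal_cdf s)) * indicator {tt..} s" .
  qed
  also have "\<dots> = ennreal (Kf tt)" by (rule K_FTC)
  finally show ?thesis .
qed

lemma integral_product:
  "(\<integral>z. max 0 (snd z - max (fst z) tt) \<partial>(std_normal_measure \<Otimes>\<^sub>M std_normal_measure)) = Kf tt"
proof -
  have sNN: "sets (std_normal_measure \<Otimes>\<^sub>M std_normal_measure) = sets (borel \<Otimes>\<^sub>M borel)"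
    by (rule sets_pair_measure_cong[OF sets_N sets_N])
  have "(\<integral>z. max 0 (snd z - max (fst z) tt) \<partial>(std_normal_measure \<Otimes>\<^sub>M std_normal_measure))
      = enn2real (\<integral>\<^sup>+z. ennreal (max 0 (snd z - max (fst z) tt)) \<partial>(std_normal_measure \<Otimes>\<^sub>M std_normal_measure))"
  proof (rule integral_eq_nn_integral)
    show "(\<lambda>z. max 0 (snd z - max (fst z) tt)) \<in> borel_measurable (std_normal_measure \<Otimes>\<^sub>M std_normal_measure)"
      unfolding measurable_cong_sets[OF sNN refl] by measurable
  qed simp
  also have "\<dots> = Kf tt" unfolding NN_integral using Kf_nonneg by simp
  finally show ?thesis .
qed

lemma nn_integral_nd_1: "0 < \<sigma> \<Longrightarrow> (\<integral>\<^sup>+x. ennreal (normal_density m \<sigma> x) \<partial>lborel) = 1"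
proof -
  assume "0 < \<sigma>"
  interpret prob_space "density lborel (normal_density m \<sigma>)" using \<open>0 < \<sigma>\<close> by (rule prob_space_normal_density)
  have "emeasure (density lborel (normal_density m \<sigma>)) UNIV = 1"
    using emeasure_space_1 by simp
  then show ?thesis by (simp add: emeasure_density)
qed

lemma gauss_integral:
  assumes A: "0 < A"
  shows "(\<integral>\<^sup>+u. ennreal (exp (- (A * (u - t)\<^sup>2 + B * (u - t) + C))) \<partial>lborel)
       = ennreal (sqrt (pi / A) * exp (B\<^sup>2 / (4 * A) - C))"
proof -
  define m where "m = t - B / (2 * A)"
  define s0 where "s0 = sqrt (1 / (2 * A))"
  define K where "K = sqrt (pi / A) * exp (B\<^sup>2 / (4 * A) - C)"
  have s0: "0 < s0" "s0\<^sup>2 = 1 / (2 * A)" using A by (auto simp: s0_def)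
  have K: "0 \<le> K" using A by (auto simp: K_def intro!: mult_nonneg_nonneg)
  have pw: "exp (- (A * (u - t)\<^sup>2 + B * (u - t) + C)) = K * normal_density m s0 u" for u
  proof -
    have "normal_density m s0 u = 1 / sqrt (pi / A) * exp (- (A * (u - m)\<^sup>2))"
      unfolding normal_density_def s0(2) using A by (simp add: field_simps)
    then have "K * normal_density m s0 u = exp (B\<^sup>2 / (4 * A) - C) * exp (- (A * (u - m)\<^sup>2))"
      using A by (simp add: K_def)
    also have "\<dots> = exp (B\<^sup>2 / (4 * A) - C - A * (u - m)\<^sup>2)"
      by (simp add: exp_add[symmetric])
    also have "B\<^sup>2 / (4 * A) - C - A * (u - m)\<^sup>2 = - (A * (u - t)\<^sup>2 + B * (u - t) + C)"
      unfolding m_def using A by (simp add: field_simps power2_eq_square)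
    finally show ?thesis ..
  qed
  have "(\<integral>\<^sup>+u. ennreal (exp (- (A * (u - t)\<^sup>2 + B * (u - t) + C))) \<partial>lborel)
      = (\<integral>\<^sup>+u. ennreal K * ennreal (normal_density m s0 u) \<partial>lborel)"
    using K by (intro nn_integral_cong) (simp only: pw ennreal_mult normal_density_nonneg)
  also have "\<dots> = ennreal K * (\<integral>\<^sup>+u. ennreal (normal_density m s0 u) \<partial>lborel)"
    by (rule nn_integral_cmult) simp
  also have "\<dots> = ennreal K" using nn_integral_nd_1[OF s0(1)] by simp
  finally show ?thesis by (simp add: K_def)
qed

lemma alg_ex:
  fixes Q S a b :: real
  assumes Q: "0 < Q" and S: "0 < S"
  shows "((a - b) / Q)\<^sup>2 / (4 * (1 / (2 * S) + 1 / Q)) - (a\<^sup>2 + b\<^sup>2) / (2 * Q)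
       = - ((S + Q) * a\<^sup>2 - 2 * (- S) * a * b + (S + Q) * b\<^sup>2) / (2 * ((S + Q) * (S + Q) - (- S)\<^sup>2))"
proof -
  define D where "D = 2 * Q * (Q + 2 * S)"
  have D: "0 < D" using Q S by (simp add: D_def)
  have n2: "2 * ((S + Q) * (S + Q) - (- S)\<^sup>2) = D" by (simp add: D_def power2_eq_square algebra_simps)
  have t1: "((a - b) / Q)\<^sup>2 / (4 * (1 / (2 * S) + 1 / Q)) = ((a - b)\<^sup>2 * S) / D"
  proof -
    have "4 * (1 / (2 * S) + 1 / Q) = 2 * (Q + 2 * S) / (S * Q)" using Q S by (simp add: field_simps)
    moreover have "((a - b) / Q)\<^sup>2 = (a - b)\<^sup>2 / (Q * Q)" by (simp add: power_divide power2_eq_square)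
    ultimately have "((a - b) / Q)\<^sup>2 / (4 * (1 / (2 * S) + 1 / Q))
        = ((a - b)\<^sup>2 * (S * Q)) / ((Q * Q) * (2 * (Q + 2 * S)))"
      by (simp only: divide_divide_eq_right divide_divide_eq_left times_divide_eq_left)
    also have "\<dots> = ((a - b)\<^sup>2 * S) / D"
    proof (rule iffD2[OF frac_eq_eq])
      show "Q * Q * (2 * (Q + 2 * S)) \<noteq> 0" using Q S by simp
      show "D \<noteq> 0" using D by simp
      show "(a - b)\<^sup>2 * (S * Q) * D = (a - b)\<^sup>2 * S * (Q * Q * (2 * (Q + 2 * S)))"
        by (simp add: D_def algebra_simps)
    qed
    finally show ?thesis .
  qed
  have t2: "(a\<^sup>2 + b\<^sup>2) / (2 * Q) = ((a\<^sup>2 + b\<^sup>2) * (Q + 2 * S)) / D"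
  proof (rule iffD2[OF frac_eq_eq])
    show "2 * Q \<noteq> 0" using Q by simp
    show "D \<noteq> 0" using D by simp
    show "(a\<^sup>2 + b\<^sup>2) * D = (a\<^sup>2 + b\<^sup>2) * (Q + 2 * S) * (2 * Q)"
      by (simp add: D_def algebra_simps)
  qed
  have t3: "(a - b)\<^sup>2 * S - (a\<^sup>2 + b\<^sup>2) * (Q + 2 * S) = - ((S + Q) * a\<^sup>2 - 2 * (- S) * a * b + (S + Q) * b\<^sup>2)"
    by (simp add: power2_eq_square algebra_simps)
  show ?thesis unfolding t1 t2 n2 by (simp add: diff_divide_distrib[symmetric] t3)
qed

lemma bvn_pw:
  assumes s: "0 < s" and sg: "0 < \<sigma>"
  shows "ennreal (bvn_density (\<mu> - t) (t - \<mu>) (s\<^sup>2 + \<sigma>\<^sup>2) (- s\<^sup>2) (s\<^sup>2 + \<sigma>\<^sup>2) (x1, x2))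
    = (\<integral>\<^sup>+u. ennreal (normal_density t s u * normal_density (\<mu> - u) \<sigma> x1 * normal_density (u - \<mu>) \<sigma> x2) \<partial>lborel)"
proof -
  define a where "a = x1 - (\<mu> - t)"
  define b where "b = x2 - (t - \<mu>)"
  define A where "A = 1 / (2 * s\<^sup>2) + 1 / \<sigma>\<^sup>2"
  define B where "B = (a - b) / \<sigma>\<^sup>2"
  define C where "C = (a\<^sup>2 + b\<^sup>2) / (2 * \<sigma>\<^sup>2)"
  define c0 where "c0 = 1 / (sqrt (2 * pi * s\<^sup>2) * sqrt (2 * pi * \<sigma>\<^sup>2) * sqrt (2 * pi * \<sigma>\<^sup>2))"
  have A: "0 < A" using s sg unfolding A_def by (intro add_pos_pos) auto
  have c0: "0 \<le> c0" by (simp add: c0_def)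
  have pw: "normal_density t s u * normal_density (\<mu> - u) \<sigma> x1 * normal_density (u - \<mu>) \<sigma> x2
      = c0 * exp (- (A * (u - t)\<^sup>2 + B * (u - t) + C))" for u
  proof -
    have "normal_density t s u * normal_density (\<mu> - u) \<sigma> x1 * normal_density (u - \<mu>) \<sigma> x2
      = c0 * (exp (- (u - t)\<^sup>2 / (2 * s\<^sup>2)) * exp (- (x1 - (\<mu> - u))\<^sup>2 / (2 * \<sigma>\<^sup>2)) * exp (- (x2 - (u - \<mu>))\<^sup>2 / (2 * \<sigma>\<^sup>2)))"
      unfolding normal_density_def c0_def by simp
    also have "exp (- (u - t)\<^sup>2 / (2 * s\<^sup>2)) * exp (- (x1 - (\<mu> - u))\<^sup>2 / (2 * \<sigma>\<^sup>2)) * exp (- (x2 - (u - \<mu>))\<^sup>2 / (2 * \<sigma>\<^sup>2))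
      = exp (- (u - t)\<^sup>2 / (2 * s\<^sup>2) + - (x1 - (\<mu> - u))\<^sup>2 / (2 * \<sigma>\<^sup>2) + - (x2 - (u - \<mu>))\<^sup>2 / (2 * \<sigma>\<^sup>2))"
      by (simp only: exp_add)
    also have "- (u - t)\<^sup>2 / (2 * s\<^sup>2) + - (x1 - (\<mu> - u))\<^sup>2 / (2 * \<sigma>\<^sup>2) + - (x2 - (u - \<mu>))\<^sup>2 / (2 * \<sigma>\<^sup>2)
      = - (A * (u - t)\<^sup>2 + B * (u - t) + C)"
      unfolding A_def B_def C_def a_def b_def using s sg
      by (simp add: field_simps power2_eq_square; simp add: algebra_simps)
    finally show ?thesis .
  qed
  have "(\<integral>\<^sup>+u. ennreal (normal_density t s u * normal_density (\<mu> - u) \<sigma> x1 * normal_density (u - \<mu>) \<sigma> x2) \<partial>lborel)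
      = (\<integral>\<^sup>+u. ennreal c0 * ennreal (exp (- (A * (u - t)\<^sup>2 + B * (u - t) + C))) \<partial>lborel)"
    using c0 by (intro nn_integral_cong) (simp only: pw ennreal_mult exp_ge_zero)
  also have "\<dots> = ennreal c0 * (\<integral>\<^sup>+u. ennreal (exp (- (A * (u - t)\<^sup>2 + B * (u - t) + C))) \<partial>lborel)"
    by (rule nn_integral_cmult) simp
  also have "\<dots> = ennreal c0 * ennreal (sqrt (pi / A) * exp (B\<^sup>2 / (4 * A) - C))"
    by (simp only: gauss_integral[OF A])
  also have "\<dots> = ennreal (c0 * sqrt (pi / A) * exp (B\<^sup>2 / (4 * A) - C))"
    using c0 by (simp add: ennreal_mult' mult.assoc)
  also have "c0 * sqrt (pi / A) * exp (B\<^sup>2 / (4 * A) - C)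
      = bvn_density (\<mu> - t) (t - \<mu>) (s\<^sup>2 + \<sigma>\<^sup>2) (- s\<^sup>2) (s\<^sup>2 + \<sigma>\<^sup>2) (x1, x2)"
  proof -
    define d where "d = (s\<^sup>2 + \<sigma>\<^sup>2) * (s\<^sup>2 + \<sigma>\<^sup>2) - (- s\<^sup>2)\<^sup>2"
    have d: "d = \<sigma>\<^sup>2 * (\<sigma>\<^sup>2 + 2 * s\<^sup>2)" unfolding d_def by (simp add: power2_eq_square algebra_simps)
    have dpos: "0 < d" unfolding d using s sg by (intro mult_pos_pos add_pos_pos) auto
    have pref: "c0 * sqrt (pi / A) = 1 / (2 * pi * sqrt d)"
    proof -
      have l: "0 \<le> c0 * sqrt (pi / A)" using c0 A by simp
      have r: "0 \<le> 1 / (2 * pi * sqrt d)" using dpos by simp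
      have "(c0 * sqrt (pi / A))\<^sup>2 = (1 / (2 * pi * sqrt d))\<^sup>2"
      proof -
        have e1: "(c0 * sqrt (pi / A))\<^sup>2 = c0\<^sup>2 * (pi / A)" using A by (simp add: power_mult_distrib)
        have e2: "c0\<^sup>2 = 1 / ((2 * pi * s\<^sup>2) * (2 * pi * \<sigma>\<^sup>2) * (2 * pi * \<sigma>\<^sup>2))"
          unfolding c0_def by (simp add: power_mult_distrib power_divide)
        have e3: "(1 / (2 * pi * sqrt d))\<^sup>2 = 1 / (4 * pi\<^sup>2 * d)"
          using dpos by (simp add: power_mult_distrib power_divide)
        have e4: "1 / ((2 * pi * s\<^sup>2) * (2 * pi * \<sigma>\<^sup>2) * (2 * pi * \<sigma>\<^sup>2)) * (pi / A) = 1 / (4 * pi\<^sup>2 * d)"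
          unfolding A_def d using s sg by (simp add: field_simps power2_eq_square)
        show ?thesis unfolding e1 e2 e3 e4 ..
      qed
      then show ?thesis using l r by (simp add: power2_eq_iff_nonneg)
    qed
    have ex: "B\<^sup>2 / (4 * A) - C = - ((s\<^sup>2 + \<sigma>\<^sup>2) * a\<^sup>2 - 2 * (- s\<^sup>2) * a * b + (s\<^sup>2 + \<sigma>\<^sup>2) * b\<^sup>2) / (2 * d)"
      unfolding A_def B_def C_def d_def by (rule alg_ex) (use s sg in simp)+
    have bv: "bvn_density (\<mu> - t) (t - \<mu>) (s\<^sup>2 + \<sigma>\<^sup>2) (- s\<^sup>2) (s\<^sup>2 + \<sigma>\<^sup>2) (x1, x2)
        = exp (- ((s\<^sup>2 + \<sigma>\<^sup>2) * a\<^sup>2 - 2 * (- s\<^sup>2) * a * b + (s\<^sup>2 + \<sigma>\<^sup>2) * b\<^sup>2) / (2 * d)) / (2 * pi * sqrt d)"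
      unfolding bvn_density_def Let_def fst_conv snd_conv a_def b_def d_def ..
    show ?thesis unfolding bv ex pref by simp
  qed
  finally show ?thesis ..
qed

lemma nd_meas[measurable]:
  assumes [measurable]: "f \<in> borel_measurable M" "g \<in> borel_measurable M"
  shows "(\<lambda>x. normal_density (f x) \<sigma> (g x)) \<in> borel_measurable M"
  unfolding normal_density_def by measurable

lemma bvn_meas: "(\<lambda>z. ennreal (bvn_density m1 m2 s11 s12 s22 z)) \<in> borel_measurable (borel :: (real \<times> real) measure)"
proof -
  have "(\<lambda>z. ennreal (bvn_density m1 m2 s11 s12 s22 z)) \<in> borel_measurable (borel \<Otimes>\<^sub>M borel :: (real \<times> real) measure)"
    unfolding bvn_density_def Let_def by measurable
  then show ?thesis unfolding borel_prod .
qed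

lemma sets_gamma2: "sets (gamma2 t s) = sets borel"
  by (simp add: gamma2_def)

lemma crps_gamma2_X:
  assumes sg: "0 < \<sigma>" and s: "0 < s"
  shows "crps_exp (gamma2 t s) (normal_measure \<mu> \<sigma>)
    = (\<integral>\<^sup>+u. ennreal (normal_density t s u) * ennreal (std_normal_cdf ((\<mu> - u) / \<sigma>)) * ennreal (std_normal_cdf ((u - \<mu>) / \<sigma>)) \<partial>lborel)"
proof -
  let ?F = "\<lambda>u. std_normal_cdf ((u - \<mu>) / \<sigma>)"
  have "crps_exp (gamma2 t s) (normal_measure \<mu> \<sigma>)
      = (\<integral>\<^sup>+u. ennreal (cdf (normal_measure \<mu> \<sigma>) u * (1 - cdf (normal_measure \<mu> \<sigma>) u)) \<partial>gamma2 t s)"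
    by (rule part1[OF normal_rd[OF sg] sets_gamma2])
  also have "\<dots> = (\<integral>\<^sup>+u. ennreal (?F u * (1 - ?F u)) \<partial>gamma2 t s)"
    using sg by (simp add: cdf_normal)
  also have "\<dots> = (\<integral>\<^sup>+u. ennreal (std_normal_density ((u - t) / s) / s) * ennreal (?F u * (1 - ?F u)) \<partial>lborel)"
    unfolding gamma2_def by (rule nn_integral_density) measurable
  also have "\<dots> = (\<integral>\<^sup>+u. ennreal (normal_density t s u) * ennreal (std_normal_cdf ((\<mu> - u) / \<sigma>)) * ennreal (std_normal_cdf ((u - \<mu>) / \<sigma>)) \<partial>lborel)"
  proof (intro nn_integral_cong)
    fix u
    have "normal_density t s u = std_normal_density ((u - t) / s) / s"
      using nd_affine[OF s, of t "(u - t) / s"] s by simp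
    moreover have "1 - ?F u = std_normal_cdf ((\<mu> - u) / \<sigma>)"
    proof -
      have e: "(\<mu> - u) / \<sigma> = - ((u - \<mu>) / \<sigma>)" by (simp add: minus_divide_left)
      show ?thesis by (simp only: e Phi_neg)
    qed
    ultimately show "ennreal (std_normal_density ((u - t) / s) / s) * ennreal (?F u * (1 - ?F u))
      = ennreal (normal_density t s u) * ennreal (std_normal_cdf ((\<mu> - u) / \<sigma>)) * ennreal (std_normal_cdf ((u - \<mu>) / \<sigma>))"
      using Phi_nonneg[of "(u - \<mu>) / \<sigma>"] Phi_nonneg[of "(\<mu> - u) / \<sigma>"]
      by (simp add: ennreal_mult mult.commute mult.left_commute)
  qed
  finally show ?thesis .
qed

lemma bvn_meas2[measurable]: "(\<lambda>z. ennreal (bvn_density m1 m2 s11 s12 s22 z)) \<in> borel_measurable (borel \<Otimes>\<^sub>M borel :: (real \<times> real) measure)"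
  unfolding bvn_density_def Let_def by measurable

lemma bvn_X:
  assumes sg: "0 < \<sigma>" and s: "0 < s"
  shows "emeasure (density lborel (\<lambda>z. ennreal (bvn_density (\<mu> - t) (t - \<mu>) (s\<^sup>2 + \<sigma>\<^sup>2) (- s\<^sup>2) (s\<^sup>2 + \<sigma>\<^sup>2) z))) ({..0} \<times> {..0})
    = (\<integral>\<^sup>+u. ennreal (normal_density t s u) * ennreal (std_normal_cdf ((\<mu> - u) / \<sigma>)) * ennreal (std_normal_cdf ((u - \<mu>) / \<sigma>)) \<partial>lborel)"
proof -
  define bf where "bf z = ennreal (bvn_density (\<mu> - t) (t - \<mu>) (s\<^sup>2 + \<sigma>\<^sup>2) (- s\<^sup>2) (s\<^sup>2 + \<sigma>\<^sup>2) z)" for z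
  define g where "g u x1 x2 = normal_density t s u * normal_density (\<mu> - u) \<sigma> x1 * normal_density (u - \<mu>) \<sigma> x2" for u x1 x2
  have bfm: "(\<lambda>z. bf z * indicator ({..0::real} \<times> {..0::real}) z) \<in> borel_measurable (borel \<Otimes>\<^sub>M borel)"
    unfolding bf_def by measurable
  have sL: "sets (lborel \<Otimes>\<^sub>M lborel :: (real \<times> real) measure) = sets (borel \<Otimes>\<^sub>M borel)"
    by (rule sets_pair_measure_cong) simp_all
  have sL2: "sets (lborel :: (real \<times> real) measure) = sets (borel \<Otimes>\<^sub>M borel)"
    using sL by (simp only: lborel_prod)
  have "emeasure (density lborel bf) ({..0} \<times> {..0}) = (\<integral>\<^sup>+z. bf z * indicator ({..0} \<times> {..0}) z \<partial>lborel)"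
  proof (rule emeasure_density)
    show "bf \<in> borel_measurable lborel"
      unfolding measurable_cong_sets[OF sL2 refl] bf_def by measurable
    show "{..0::real} \<times> {..0::real} \<in> sets lborel" unfolding sL2 by measurable
  qed
  also have "\<dots> = (\<integral>\<^sup>+z. bf z * indicator ({..0} \<times> {..0}) z \<partial>(lborel \<Otimes>\<^sub>M lborel))"
    by (simp only: lborel_prod)
  also have "\<dots> = (\<integral>\<^sup>+x1. \<integral>\<^sup>+x2. bf (x1, x2) * indicator ({..0} \<times> {..0}) (x1, x2) \<partial>lborel \<partial>lborel)"
  proof (rule lborel.nn_integral_fst[symmetric])
    show "(\<lambda>z. bf z * indicator ({..0::real} \<times> {..0::real}) z) \<in> borel_measurable (lborel \<Otimes>\<^sub>M lborel)"
      unfolding measurable_cong_sets[OF sL refl] by (rule bfm)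
  qed
  also have "\<dots> = (\<integral>\<^sup>+x1. \<integral>\<^sup>+x2. \<integral>\<^sup>+u. ennreal (g u x1 x2) * (indicator {..0} x1 * indicator {..0} x2) \<partial>lborel \<partial>lborel \<partial>lborel)"
  proof (intro nn_integral_cong)
    fix x1 x2 :: real
    have bfe: "bf (x1, x2) = (\<integral>\<^sup>+u. ennreal (g u x1 x2) \<partial>lborel)"
      unfolding bf_def g_def by (rule bvn_pw[OF s sg])
    show "bf (x1, x2) * indicator ({..0} \<times> {..0}) (x1, x2) = (\<integral>\<^sup>+u. ennreal (g u x1 x2) * (indicator {..0} x1 * indicator {..0} x2) \<partial>lborel)"
    proof -
      have m: "(\<lambda>u. ennreal (g u x1 x2)) \<in> borel_measurable lborel" unfolding g_def by measurable
      show ?thesis using bfe by (simp add: indicator_times nn_integral_multc[OF m])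
    qed
  qed
  also have "\<dots> = (\<integral>\<^sup>+x1. \<integral>\<^sup>+u. \<integral>\<^sup>+x2. ennreal (g u x1 x2) * (indicator {..0} x1 * indicator {..0} x2) \<partial>lborel \<partial>lborel \<partial>lborel)"
  proof (rule nn_integral_cong)
    fix x1 :: real
    show "(\<integral>\<^sup>+x2. \<integral>\<^sup>+u. ennreal (g u x1 x2) * (indicator {..0} x1 * indicator {..0} x2) \<partial>lborel \<partial>lborel)
      = (\<integral>\<^sup>+u. \<integral>\<^sup>+x2. ennreal (g u x1 x2) * (indicator {..0} x1 * indicator {..0} x2) \<partial>lborel \<partial>lborel)"
    proof (rule lborel_pair.Fubini'[of "\<lambda>x2 u. ennreal (g u x1 x2) * (indicator {..0} x1 * indicator {..0} x2)", symmetric])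
      show "(\<lambda>(x2, u). ennreal (g u x1 x2) * (indicator {..0} x1 * indicator {..0} x2)) \<in> borel_measurable (lborel \<Otimes>\<^sub>M lborel)"
        unfolding measurable_cong_sets[OF sL refl] g_def by measurable
    qed
  qed
  also have "\<dots> = (\<integral>\<^sup>+x1. \<integral>\<^sup>+u. ennreal (normal_density t s u * normal_density (\<mu> - u) \<sigma> x1) * indicator {..0} x1
       * ennreal (std_normal_cdf ((\<mu> - u) / \<sigma>)) \<partial>lborel \<partial>lborel)"
  proof (intro nn_integral_cong)
    fix x1 u :: real
    have "(\<integral>\<^sup>+x2. ennreal (g u x1 x2) * (indicator {..0} x1 * indicator {..0} x2) \<partial>lborel)
        = (\<integral>\<^sup>+x2. (ennreal (normal_density t s u * normal_density (\<mu> - u) \<sigma> x1) * indicator {..0} x1)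
              * (ennreal (normal_density (u - \<mu>) \<sigma> x2) * indicator {..0} x2) \<partial>lborel)"
      unfolding g_def by (intro nn_integral_cong) (simp add: ennreal_mult mult_ac)
    also have "\<dots> = (ennreal (normal_density t s u * normal_density (\<mu> - u) \<sigma> x1) * indicator {..0} x1)
              * (\<integral>\<^sup>+x2. ennreal (normal_density (u - \<mu>) \<sigma> x2) * indicator {..0} x2 \<partial>lborel)"
      by (rule nn_integral_cmult) simp
    also have "(\<integral>\<^sup>+x2. ennreal (normal_density (u - \<mu>) \<sigma> x2) * indicator {..0} x2 \<partial>lborel)
        = ennreal (std_normal_cdf ((0 - (u - \<mu>)) / \<sigma>))" by (rule nn_integral_nd_le[OF sg])
    finally show "(\<integral>\<^sup>+x2. ennreal (g u x1 x2) * (indicator {..0} x1 * indicator {..0} x2) \<partial>lborel)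
      = ennreal (normal_density t s u * normal_density (\<mu> - u) \<sigma> x1) * indicator {..0} x1
       * ennreal (std_normal_cdf ((\<mu> - u) / \<sigma>))" by simp
  qed
  also have "\<dots> = (\<integral>\<^sup>+u. \<integral>\<^sup>+x1. ennreal (normal_density t s u * normal_density (\<mu> - u) \<sigma> x1) * indicator {..0} x1
       * ennreal (std_normal_cdf ((\<mu> - u) / \<sigma>)) \<partial>lborel \<partial>lborel)"
  proof (rule lborel_pair.Fubini'[of "\<lambda>x1 u. ennreal (normal_density t s u * normal_density (\<mu> - u) \<sigma> x1) * indicator {..0} x1
       * ennreal (std_normal_cdf ((\<mu> - u) / \<sigma>))", symmetric])
    show "(\<lambda>(x1, u). ennreal (normal_density t s u * normal_density (\<mu> - u) \<sigma> x1) * indicator {..0} x1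
       * ennreal (std_normal_cdf ((\<mu> - u) / \<sigma>))) \<in> borel_measurable (lborel \<Otimes>\<^sub>M lborel)"
      unfolding measurable_cong_sets[OF sL refl] by measurable
  qed
  also have "\<dots> = (\<integral>\<^sup>+u. ennreal (normal_density t s u) * ennreal (std_normal_cdf ((\<mu> - u) / \<sigma>)) * ennreal (std_normal_cdf ((u - \<mu>) / \<sigma>)) \<partial>lborel)"
  proof (intro nn_integral_cong)
    fix u :: real
    have "(\<integral>\<^sup>+x1. ennreal (normal_density t s u * normal_density (\<mu> - u) \<sigma> x1) * indicator {..0} x1
       * ennreal (std_normal_cdf ((\<mu> - u) / \<sigma>)) \<partial>lborel)
       = (\<integral>\<^sup>+x1. (ennreal (normal_density t s u) * ennreal (std_normal_cdf ((\<mu> - u) / \<sigma>)))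
           * (ennreal (normal_density (\<mu> - u) \<sigma> x1) * indicator {..0} x1) \<partial>lborel)"
      by (intro nn_integral_cong) (simp add: ennreal_mult mult_ac)
    also have "\<dots> = (ennreal (normal_density t s u) * ennreal (std_normal_cdf ((\<mu> - u) / \<sigma>)))
           * (\<integral>\<^sup>+x1. ennreal (normal_density (\<mu> - u) \<sigma> x1) * indicator {..0} x1 \<partial>lborel)"
      by (rule nn_integral_cmult) simp
    also have "(\<integral>\<^sup>+x1. ennreal (normal_density (\<mu> - u) \<sigma> x1) * indicator {..0} x1 \<partial>lborel)
        = ennreal (std_normal_cdf ((0 - (\<mu> - u)) / \<sigma>))" by (rule nn_integral_nd_le[OF sg])
    finally show "(\<integral>\<^sup>+x1. ennreal (normal_density t s u * normal_density (\<mu> - u) \<sigma> x1) * indicator {..0} x1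
       * ennreal (std_normal_cdf ((\<mu> - u) / \<sigma>)) \<partial>lborel)
       = ennreal (normal_density t s u) * ennreal (std_normal_cdf ((\<mu> - u) / \<sigma>)) * ennreal (std_normal_cdf ((u - \<mu>) / \<sigma>))"
      by simp
  qed
  finally show ?thesis unfolding bf_def .
qed

lemma crps_gamma2:
  assumes sg: "0 < \<sigma>" and s: "0 < s"
  shows "crps_exp (gamma2 t s) (normal_measure \<mu> \<sigma>) =
           ennreal (bvn_cdf (0, 0) (\<mu> - t, t - \<mu>) (s\<^sup>2 + \<sigma>\<^sup>2, - s\<^sup>2, s\<^sup>2 + \<sigma>\<^sup>2))"
proof -
  define X where "X = (\<integral>\<^sup>+u. ennreal (normal_density t s u) * ennreal (std_normal_cdf ((\<mu> - u) / \<sigma>)) * ennreal (std_normal_cdf ((u - \<mu>) / \<sigma>)) \<partial>lborel)"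
  have c: "crps_exp (gamma2 t s) (normal_measure \<mu> \<sigma>) = X"
    unfolding X_def by (rule crps_gamma2_X[OF sg s])
  have e: "emeasure (density lborel (\<lambda>z. ennreal (bvn_density (\<mu> - t) (t - \<mu>) (s\<^sup>2 + \<sigma>\<^sup>2) (- s\<^sup>2) (s\<^sup>2 + \<sigma>\<^sup>2) z))) ({..0} \<times> {..0}) = X"
    unfolding X_def by (rule bvn_X[OF sg s])
  have "X \<le> (\<integral>\<^sup>+u. ennreal (normal_density t s u) \<partial>lborel)"
    unfolding X_def
  proof (rule nn_integral_mono)
    fix u
    have "ennreal (std_normal_cdf ((\<mu> - u) / \<sigma>)) * ennreal (std_normal_cdf ((u - \<mu>) / \<sigma>)) \<le> 1 * 1"
      using Phi_le1 by (intro mult_mono) auto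
    then have "ennreal (normal_density t s u) * (ennreal (std_normal_cdf ((\<mu> - u) / \<sigma>)) * ennreal (std_normal_cdf ((u - \<mu>) / \<sigma>)))
       \<le> ennreal (normal_density t s u) * 1" by (intro mult_left_mono) auto
    then show "ennreal (normal_density t s u) * ennreal (std_normal_cdf ((\<mu> - u) / \<sigma>)) * ennreal (std_normal_cdf ((u - \<mu>) / \<sigma>))
       \<le> ennreal (normal_density t s u)" by (simp add: mult.assoc)
  qed
  also have "\<dots> = 1" by (rule nn_integral_nd_1[OF s])
  finally have Xfin: "X < \<infinity>" by (simp add: le_less_trans)
  have "bvn_cdf (0, 0) (\<mu> - t, t - \<mu>) (s\<^sup>2 + \<sigma>\<^sup>2, - s\<^sup>2, s\<^sup>2 + \<sigma>\<^sup>2)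
      = enn2real (emeasure (density lborel (\<lambda>z. ennreal (bvn_density (\<mu> - t) (t - \<mu>) (s\<^sup>2 + \<sigma>\<^sup>2) (- s\<^sup>2) (s\<^sup>2 + \<sigma>\<^sup>2) z))) ({..0} \<times> {..0}))"
    unfolding bvn_cdf_def measure_def by simp
  also have "\<dots> = enn2real X" by (simp only: e)
  finally have "ennreal (bvn_cdf (0, 0) (\<mu> - t, t - \<mu>) (s\<^sup>2 + \<sigma>\<^sup>2, - s\<^sup>2, s\<^sup>2 + \<sigma>\<^sup>2)) = X"
    using Xfin by simp
  then show ?thesis using c by simp
qed

theorem theorem2:
  fixes M \<gamma> :: "real measure" and \<mu> \<sigma> t s\<^sub>\<gamma> :: real
  assumes "real_distribution M"
    and "sets \<gamma> = sets borel"
    and "\<sigma> > 0" and "s\<^sub>\<gamma> > 0"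
  shows "(crps_exp \<gamma> M = (\<integral>\<^sup>+ u. ennreal (cdf M u * (1 - cdf M u)) \<partial>\<gamma>)) \<and>
         (crps_exp (gamma1 t) (normal_measure \<mu> \<sigma>) =
           ennreal (\<sigma> * (let tt = (t - \<mu>) / \<sigma> in
              tt * (std_normal_cdf tt)\<^sup>2 - tt * std_normal_cdf tt + 1 / sqrt pi
              - 1 / sqrt pi * std_normal_cdf (tt * sqrt 2)
              + 2 * std_normal_density tt * std_normal_cdf tt - std_normal_density tt))) \<and>
         (crps_exp (gamma1 t) (normal_measure \<mu> \<sigma>) =
           ennreal (\<sigma> * (\<integral>z. max 0 (snd z - max (fst z) ((t - \<mu>) / \<sigma>))
                             \<partial>(std_normal_measure \<Otimes>\<^sub>M std_normal_measure)))) \<and>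
         (crps_exp (gamma2 t s\<^sub>\<gamma>) (normal_measure \<mu> \<sigma>) =
           ennreal (bvn_cdf (0, 0) (\<mu> - t, t - \<mu>)
                      (s\<^sub>\<gamma>\<^sup>2 + \<sigma>\<^sup>2, - s\<^sub>\<gamma>\<^sup>2, s\<^sub>\<gamma>\<^sup>2 + \<sigma>\<^sup>2)))"
proof (intro conjI)
  show "crps_exp \<gamma> M = (\<integral>\<^sup>+ u. ennreal (cdf M u * (1 - cdf M u)) \<partial>\<gamma>)"
    by (rule part1[OF assms(1,2)])
  show "crps_exp (gamma1 t) (normal_measure \<mu> \<sigma>) =
           ennreal (\<sigma> * (let tt = (t - \<mu>) / \<sigma> in
              tt * (std_normal_cdf tt)\<^sup>2 - tt * std_normal_cdf tt + 1 / sqrt pi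
              - 1 / sqrt pi * std_normal_cdf (tt * sqrt 2)
              + 2 * std_normal_density tt * std_normal_cdf tt - std_normal_density tt))"
    unfolding crps_gamma1[OF assms(3)] Let_def Kf_def ..
  show "crps_exp (gamma1 t) (normal_measure \<mu> \<sigma>) =
           ennreal (\<sigma> * (\<integral>z. max 0 (snd z - max (fst z) ((t - \<mu>) / \<sigma>))
                             \<partial>(std_normal_measure \<Otimes>\<^sub>M std_normal_measure)))"
    unfolding crps_gamma1[OF assms(3)] integral_product ..
  show "crps_exp (gamma2 t s\<^sub>\<gamma>) (normal_measure \<mu> \<sigma>) =
           ennreal (bvn_cdf (0, 0) (\<mu> - t, t - \<mu>)
                      (s\<^sub>\<gamma>\<^sup>2 + \<sigma>\<^sup>2, - s\<^sub>\<gamma>\<^sup>2, s\<^sub>\<gamma>\<^sup>2 + \<sigma>\<^sup>2))"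
    by (rule crps_gamma2[OF assms(3,4)])
qed

end
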